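(* Fix $c\in(0,\infty)$. Let $E=\mathbb{C}\times L^1([-2,0];\mathbb{C})$ (a Banach lattice with the componentwise order) and define $A$ on $E$ by $D(A)=\{(x,f)\in\mathbb{C}\times W^{1,1}((-2,0);\mathbb{C}) : f(0)=x\}$, $A(x,f)=(\langle\Phi,f\rangle, f')$, where $\langle\Phi,f\rangle = c\Big(\int_{-2}^{-1} f(s)\,ds - \int_{-1}^0 f(s)\,ds + f(-2) - f(0)\Big)$. Let $u:=(1,\mathbb{1}_{[-2,0]})\in E$ and let $\varphi=(1,c\mathbb{1})\in E'$, i.e. $\langle\varphi,(x,f)\rangle = x + c\int_{-2}^0 f(s)\,ds$. Then: (1) there is $\varepsilon>0$ such that $(0,\varepsilon)\subseteq\rho(A)$ and $R(\mu,A)\succeq u\otimes\varphi$ for all $\mu\in(0,\varepsilon)$; (2) there is $\varepsilon>0$ such that $(-\varepsilon,0)\subseteq\rho(A)$ and $R(\mu,A)\preceq -u\otimes\varphi$ for all $\mu\in(-\varepsilon,0)$.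
   Context: $R(\mu,A)=(\mu-A)^{-1}$. $u\otimes\varphi$ is the operator $h\mapsto\langle\varphi,h\rangle u$. For bounded real operators $T,S$ on $E$, $T\succeq S$ (equivalently $S\preceq T$) means there is $c'>0$ such that $T-c'S$ maps the positive cone $E_+$ into itself. *)

theory Defs
  imports "HOL-Analysis.Analysis"
begin

text \<open>Elements of E = C x L^1([-2,0];C) are represented by pairs (x, f) with f an
  absolutely integrable function on [-2,0]; two representatives denote the same
  element iff they agree in the first component and almost everywhere on [-2,0].\<close>

type_synonym elt = "complex \<times> (real \<Rightarrow> complex)"

definition inE :: "elt \<Rightarrow> bool" where
  "inE v \<longleftrightarrow> snd v absolutely_integrable_on {-2..0}"

definition eqE :: "elt \<Rightarrow> elt \<Rightarrow> bool" where
  "eqE v w \<longleftrightarrow> fst v = fst w \<and> (AE s in lborel. s \<in> {-2..0} \<longrightarrow> snd v s = snd w s)"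

definition normE :: "elt \<Rightarrow> real" where
  "normE v = cmod (fst v) + integral {-2..0} (\<lambda>s. cmod (snd v s))"

definition scaleE :: "complex \<Rightarrow> elt \<Rightarrow> elt" where
  "scaleE a v = (a * fst v, \<lambda>s. a * snd v s)"

definition diffE :: "elt \<Rightarrow> elt \<Rightarrow> elt" where
  "diffE v w = (fst v - fst w, \<lambda>s. snd v s - snd w s)"

definition posE :: "elt \<Rightarrow> bool" where
  "posE v \<longleftrightarrow> fst v \<in> \<real> \<and> 0 \<le> Re (fst v) \<and>
     (AE s in lborel. s \<in> {-2..0} \<longrightarrow> snd v s \<in> \<real> \<and> 0 \<le> Re (snd v s))"

text \<open>f is the absolutely continuous (W^{1,1}) representative with weak derivative g.\<close>
definition W11_rep :: "(real \<Rightarrow> complex) \<Rightarrow> (real \<Rightarrow> complex) \<Rightarrow> bool" where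
  "W11_rep f g \<longleftrightarrow> g absolutely_integrable_on {-2..0} \<and>
     (\<forall>t\<in>{-2..0}. f t = f (-2) + integral {-2..t} g)"

definition Phi :: "real \<Rightarrow> (real \<Rightarrow> complex) \<Rightarrow> complex" where
  "Phi c f = of_real c * (integral {-2..-1} f - integral {-1..0} f + f (-2) - f 0)"

text \<open>Graph of A: A_graph c v w means v \<in> D(A) and A v = w.\<close>
definition A_graph :: "real \<Rightarrow> elt \<Rightarrow> elt \<Rightarrow> bool" where
  "A_graph c v w \<longleftrightarrow> inE v \<and>
     (\<exists>f g. W11_rep f g \<and> eqE v (f 0, f) \<and> eqE w (Phi c f, g))"

definition in_resolvent_set :: "real \<Rightarrow> complex \<Rightarrow> bool" where
  "in_resolvent_set c \<mu> \<longleftrightarrow>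
     (\<forall>h. inE h \<longrightarrow> (\<exists>v w. A_graph c v w \<and> eqE (diffE (scaleE \<mu> v) w) h)) \<and>
     (\<forall>v w. A_graph c v w \<and> eqE (diffE (scaleE \<mu> v) w) (0, \<lambda>_. 0) \<longrightarrow> eqE v (0, \<lambda>_. 0)) \<and>
     (\<exists>M. \<forall>v w. A_graph c v w \<longrightarrow> normE v \<le> M * normE (diffE (scaleE \<mu> v) w))"

text \<open>R(mu,A) h: (a representative of) the unique v \<in> D(A) with (mu - A) v = h.\<close>
definition resolvent :: "real \<Rightarrow> complex \<Rightarrow> elt \<Rightarrow> elt" where
  "resolvent c \<mu> h = (SOME v. \<exists>w. A_graph c v w \<and> eqE (diffE (scaleE \<mu> v) w) h)"

definition uE :: elt where
  "uE = (1, \<lambda>_. 1)"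

definition phiE :: "real \<Rightarrow> elt \<Rightarrow> complex" where
  "phiE c h = fst h + of_real c * integral {-2..0} (snd h)"

definition tensorE :: "elt \<Rightarrow> (elt \<Rightarrow> complex) \<Rightarrow> elt \<Rightarrow> elt" where
  "tensorE u \<phi> h = scaleE (\<phi> h) u"

definition succeqE :: "(elt \<Rightarrow> elt) \<Rightarrow> (elt \<Rightarrow> elt) \<Rightarrow> bool" where
  "succeqE T S \<longleftrightarrow> (\<exists>c'>0. \<forall>h. inE h \<and> posE h \<longrightarrow>
      posE (diffE (T h) (scaleE (of_real c') (S h))))"

end

theory Submission
  imports Defs
begin

lemma sigma_finite_lebesgue_real: "sigma_finite_measure (lebesgue :: real measure)"
proof
  show "\<exists>A::real set set. countable A \<and> A \<subseteq> sets lebesgue \<and> \<Union>A = space lebesgue \<and> (\<forall>a\<in>A. emeasure lebesgue a \<noteq> \<infinity>)"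
  proof (intro exI[of _ "range (\<lambda>n::nat. {-real n..real n})"] conjI)
    show "\<Union>(range (\<lambda>n::nat. {-real n..real n})) = space lebesgue"
    proof safe
      fix x :: real
      obtain n :: nat where "\<bar>x\<bar> \<le> real n" using real_arch_simple by blast
      then have "x \<in> {-real n..real n}" by auto
      then show "x \<in> \<Union>(range (\<lambda>n::nat. {-real n..real n}))" by blast
    qed auto
  qed auto
qed

interpretation leb: sigma_finite_measure "lebesgue :: real measure"
  by (rule sigma_finite_lebesgue_real)

interpretation leb_pair: pair_sigma_finite "lebesgue :: real measure" "lebesgue :: real measure" ..

lemma id_leb_meas[measurable]: "(\<lambda>x::real. x) \<in> borel_measurable lebesgue"
  by (simp add: measurable_completion)

lemma fubini_tri:
  fixes p q :: "real \<Rightarrow> complex"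
  assumes q: "q absolutely_integrable_on {a..b}" and p: "continuous_on {a..b} p"
  shows "integral {a..b} (\<lambda>s. p s * integral {a..s} q) = integral {a..b} (\<lambda>r. q r * integral {r..b} p)"
proof -
  define S where "S = {a..b}"
  define p' where "p' s = indicator S s *\<^sub>R p s" for s
  define q' where "q' r = indicator S r *\<^sub>R q r" for r
  have pabs: "p absolutely_integrable_on S"
    unfolding S_def using absolutely_integrable_continuous[of a b p] p by simp
  have qabs: "q absolutely_integrable_on S" using q S_def by simp
  have pint: "integrable lebesgue p'" using pabs unfolding p'_def set_integrable_def .
  have qint: "integrable lebesgue q'" using qabs unfolding q'_def set_integrable_def .
  have [measurable]: "p' \<in> borel_measurable lebesgue" using pint by (rule borel_measurable_integrable)
  have [measurable]: "q' \<in> borel_measurable lebesgue" using qint by (rule borel_measurable_integrable)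
  define g where "g s r = (if r \<le> s then p' s * q' r else 0)" for s r
  have gm: "(\<lambda>(s,r). g s r) \<in> borel_measurable (lebesgue \<Otimes>\<^sub>M lebesgue)"
    unfolding g_def by measurable
  have Gint: "integrable (lebesgue \<Otimes>\<^sub>M lebesgue) (\<lambda>(s,r). p' s * q' r)"
  proof (rule leb_pair.Fubini_integrable)
    show "(\<lambda>(s,r). p' s * q' r) \<in> borel_measurable (lebesgue \<Otimes>\<^sub>M lebesgue)" by measurable
    have "(\<lambda>s. LINT r|lebesgue. norm (case (s, r) of (s, r) \<Rightarrow> p' s * q' r)) = (\<lambda>s. norm (p' s) * (LINT r|lebesgue. norm (q' r)))"
      by (simp add: norm_mult)
    moreover have "integrable lebesgue (\<lambda>s. norm (p' s) * (LINT r|lebesgue. norm (q' r)))"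
      using pint by (intro integrable_mult_left integrable_norm)
    ultimately show "integrable lebesgue (\<lambda>s. LINT r|lebesgue. norm (case (s, r) of (s, r) \<Rightarrow> p' s * q' r))"
      by simp
    show "AE s in lebesgue. integrable lebesgue (\<lambda>r. case (s, r) of (s, r) \<Rightarrow> p' s * q' r)"
      using qint by (auto intro!: integrable_mult_right)
  qed
  have gint: "integrable (lebesgue \<Otimes>\<^sub>M lebesgue) (\<lambda>(s,r). g s r)"
    by (rule Bochner_Integration.integrable_bound[OF Gint gm]) (auto simp: g_def norm_mult)
  have in1: "(LINT r|lebesgue. g s r) = (if s \<in> S then p s * integral {a..s} q else 0)" for s
  proof (cases "s \<in> S")
    case True
    have "(LINT r|lebesgue. g s r) = (LINT r|lebesgue. p' s * (indicator {a..s} r *\<^sub>R q r))"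
      using True by (intro Bochner_Integration.integral_cong) (auto simp: g_def q'_def S_def indicator_def)
    also have "\<dots> = p' s * (LINT r|lebesgue. indicator {a..s} r *\<^sub>R q r)" by (rule integral_mult_right_zero)
    also have "(LINT r|lebesgue. indicator {a..s} r *\<^sub>R q r) = integral {a..s} q"
    proof -
      have "set_integrable lebesgue {a..s} q"
        by (rule set_integrable_subset[OF qabs]) (use True in \<open>auto simp: S_def\<close>)
      then show ?thesis using set_lebesgue_integral_eq_integral(2) unfolding set_lebesgue_integral_def by metis
    qed
    finally show ?thesis using True by (simp add: p'_def)
  next
    case False
    then have "\<And>r. g s r = 0" by (simp add: g_def p'_def)
    then show ?thesis using False by simp
  qed
  have in2: "(LINT s|lebesgue. g s r) = (if r \<in> S then q r * integral {r..b} p else 0)" for r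
  proof (cases "r \<in> S")
    case True
    have "(LINT s|lebesgue. g s r) = (LINT s|lebesgue. q' r * (indicator {r..b} s *\<^sub>R p s))"
      using True by (intro Bochner_Integration.integral_cong) (auto simp: g_def p'_def S_def indicator_def)
    also have "\<dots> = q' r * (LINT s|lebesgue. indicator {r..b} s *\<^sub>R p s)" by (rule integral_mult_right_zero)
    also have "(LINT s|lebesgue. indicator {r..b} s *\<^sub>R p s) = integral {r..b} p"
    proof -
      have "set_integrable lebesgue {r..b} p"
        by (rule set_integrable_subset[OF pabs]) (use True in \<open>auto simp: S_def\<close>)
      then show ?thesis using set_lebesgue_integral_eq_integral(2) unfolding set_lebesgue_integral_def by metis
    qed
    finally show ?thesis using True by (simp add: q'_def)
  next
    case False
    then have "\<And>s. g s r = 0" by (simp add: g_def q'_def)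
    then show ?thesis using False by simp
  qed
  have "integral {a..b} (\<lambda>s. p s * integral {a..s} q) = integral UNIV (\<lambda>s. LINT r|lebesgue. g s r)"
    unfolding in1 S_def by (rule integral_restrict_UNIV[symmetric])
  also have "\<dots> = (LINT s|lebesgue. LINT r|lebesgue. g s r)"
    using has_integral_integral_lebesgue[OF leb_pair.integrable_fst[OF gint]] by (rule integral_unique)
  also have "\<dots> = (LINT r|lebesgue. LINT s|lebesgue. g s r)"
    using leb_pair.Fubini_integral[OF gint] by simp
  also have "\<dots> = integral UNIV (\<lambda>r. LINT s|lebesgue. g s r)"
    using has_integral_integral_lebesgue[OF leb_pair.integrable_snd[OF gint]] by (rule integral_unique[symmetric])
  also have "\<dots> = integral {a..b} (\<lambda>r. q r * integral {r..b} p)"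
    unfolding in2 S_def by (rule integral_restrict_UNIV)
  finally show ?thesis .
qed

lemma AE_negl:
  assumes "AE s in lborel. s \<in> {-2..0} \<longrightarrow> f s = g s"
  obtains N where "negligible N" "\<And>s. s \<in> {-2..0} - N \<Longrightarrow> f s = g s"
proof -
  from AE_E[OF assms] obtain N where N: "{x \<in> space lborel. \<not> (x \<in> {-2..0} \<longrightarrow> f x = g x)} \<subseteq> N"
    "emeasure lborel N = 0" "N \<in> sets lborel" .
  have "N \<in> null_sets lebesgue" using N by (intro null_sets_completionI) (simp add: null_sets_def)
  then have "negligible N" by (simp add: negligible_iff_null_sets)
  then show ?thesis using N(1) that by auto
qed

lemma AE_int_eq:
  assumes "AE s in lborel. s \<in> {-2..0} \<longrightarrow> f s = g s" "{a..b} \<subseteq> {-2..0}"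
  shows "integral {a..b} f = integral {a..b} g"
proof -
  obtain N where N: "negligible N" "\<And>s. s \<in> {-2..0} - N \<Longrightarrow> f s = g s" using AE_negl[OF assms(1)] by blast
  show ?thesis by (rule integral_spike[OF N(1)]) (use N(2) assms(2) in auto)
qed

lemma AE_ai:
  assumes "AE s in lborel. s \<in> {-2..0} \<longrightarrow> f s = g s" "(g::real\<Rightarrow>complex) absolutely_integrable_on {-2..0}"
  shows "f absolutely_integrable_on {-2..0}"
proof -
  obtain N where N: "negligible N" "\<And>s. s \<in> {-2..0} - N \<Longrightarrow> f s = g s" using AE_negl[OF assms(1)] by blast
  show ?thesis by (rule absolutely_integrable_spike[OF assms(2) N(1)]) (use N(2) in auto)
qed

lemma eqE_refl: "eqE v v" by (simp add: eqE_def)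

lemma eqE_sym: "eqE v w \<Longrightarrow> eqE w v"
  unfolding eqE_def by (auto elim: eventually_mono)

lemma eqE_trans: "eqE u v \<Longrightarrow> eqE v w \<Longrightarrow> eqE u w"
  unfolding eqE_def by (auto elim: eventually_mono dest: AE_conjI)

lemma ai_cont_mult:
  fixes f g :: "real \<Rightarrow> complex"
  assumes "continuous_on {a..b} f" "g absolutely_integrable_on {a..b}"
  shows "(\<lambda>x. f x * g x) absolutely_integrable_on {a..b}"
  by (rule absolutely_integrable_bounded_measurable_product[OF bilinear_times])
     (auto intro: continuous_imp_measurable_on_sets_lebesgue compact_imp_bounded compact_continuous_image assms)

lemma ibp:
  fixes p P q :: "real \<Rightarrow> complex"
  assumes q: "q absolutely_integrable_on {a..t}" and p: "continuous_on {a..t} p"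
    and P: "\<And>s. s \<in> {a..t} \<Longrightarrow> (P has_vector_derivative p s) (at s within {a..t})"
  shows "integral {a..t} (\<lambda>s. p s * integral {a..s} q) = integral {a..t} (\<lambda>r. q r * (P t - P r))"
proof -
  have "integral {a..t} (\<lambda>s. p s * integral {a..s} q) = integral {a..t} (\<lambda>r. q r * integral {r..t} p)"
    by (rule fubini_tri[OF q p])
  also have "\<dots> = integral {a..t} (\<lambda>r. q r * (P t - P r))"
  proof (rule integral_cong)
    fix r assume r: "r \<in> {a..t}"
    have "(p has_integral (P t - P r)) {r..t}"
      by (rule fundamental_theorem_of_calculus) (use r in \<open>auto intro: has_vector_derivative_within_subset[OF P]\<close>)
    then show "q r * integral {r..t} p = q r * (P t - P r)" by (simp add: integral_unique)
  qed
  finally show ?thesis .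
qed

definition ee :: "real \<Rightarrow> real \<Rightarrow> complex" where
  "ee m t = complex_of_real (exp (m * t))"

lemma ee_deriv: "(ee m has_vector_derivative (of_real m * ee m t)) (at t within S)"
  unfolding ee_def
  by (auto intro!: derivative_eq_intros simp: mult.commute)

lemma ee_cont: "continuous_on S (ee m)"
  unfolding ee_def by (intro continuous_intros)

lemma ee_0[simp]: "ee m 0 = 1" by (simp add: ee_def)

lemma ee_mult: "ee m s * ee m t = ee m (s + t)"
  by (simp add: ee_def distrib_left exp_add)

lemma ode_unique:
  fixes d :: "real \<Rightarrow> complex"
  assumes cont: "continuous_on {-2..0} d"
    and eq: "\<And>t. t \<in> {-2..0} \<Longrightarrow> d t = d (-2) + of_real m * integral {-2..t} d"
    and t: "t \<in> {-2..0}"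
  shows "d t = ee m (t+2) * d (-2)"
proof -
  have der: "(d has_vector_derivative (of_real m * d u)) (at u within {-2..0})" if u: "u \<in> {-2..0}" for u
  proof -
    have h: "((\<lambda>u. d(-2) + of_real m * integral {-2..u} d) has_vector_derivative (of_real m * d u)) (at u within {-2..0})"
      using integral_has_vector_derivative[OF cont u] by (auto intro!: derivative_eq_intros)
    show ?thesis by (rule has_vector_derivative_transform[OF u _ h]) (rule eq)
  qed
  define z where "z u = ee (-m) (u+2) * d u" for u
  have zd: "(z has_vector_derivative 0) (at u within {-2..0})" if u: "u \<in> {-2..0}" for u
  proof -
    have e: "((\<lambda>u. ee (-m) (u+2)) has_vector_derivative (of_real (-m) * ee (-m) (u+2))) (at u within {-2..0})"
      unfolding ee_def by (auto intro!: derivative_eq_intros simp: algebra_simps)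
    have "(z has_vector_derivative (ee (-m) (u+2) * (of_real m * d u) + (of_real (-m) * ee (-m) (u+2)) * d u)) (at u within {-2..0})"
      unfolding z_def by (rule has_vector_derivative_mult[OF e der[OF u]])
    then show ?thesis by (simp add: algebra_simps)
  qed
  then obtain C where C: "\<And>u. u \<in> {-2..0} \<Longrightarrow> z u = C"
    using has_vector_derivative_zero_constant[of "{-2..0}" z] zd by (metis convex_real_interval(5))
  have "z (-2) = d (-2)" by (simp add: z_def)
  then have "z t = d (-2)" using C[OF t] C[of "-2"] by simp
  then have "ee m (t+2) * z t = ee m (t+2) * d (-2)" by simp
  moreover have "ee m (t+2) * z t = d t"
    unfolding z_def by (simp add: ee_def mult.assoc[symmetric] exp_add[symmetric] flip: of_real_mult)
  ultimately show ?thesis by simp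
qed

lemma ai_sub_ai: "f absolutely_integrable_on {a..b} \<Longrightarrow> {c..d} \<subseteq> {a..b} \<Longrightarrow> (f::real\<Rightarrow>complex) absolutely_integrable_on {c..d}"
  by (rule set_integrable_subset) auto

lemma ai_sub: "f absolutely_integrable_on {a..b} \<Longrightarrow> {c..d} \<subseteq> {a..b} \<Longrightarrow> (f::real\<Rightarrow>complex) integrable_on {c..d}"
  using ai_sub_ai set_lebesgue_integral_eq_integral(1) by blast

lemma cont_sub_int: "continuous_on {a..b} f \<Longrightarrow> {c..d} \<subseteq> {a..b} \<Longrightarrow> (f::real\<Rightarrow>complex) integrable_on {c..d}"
  by (meson continuous_on_subset integrable_continuous_interval)

lemma cont_ai: "continuous_on {a..b} f \<Longrightarrow> (f::real\<Rightarrow>complex) absolutely_integrable_on {a..b}"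
  using absolutely_integrable_continuous[of a b f] by simp

lemma Phi_lin:
  assumes f: "continuous_on {-2..0} f" and g: "continuous_on {-2..0} g"
  shows "Phi c (\<lambda>t. a * f t + g t) = a * Phi c f + Phi c g"
proof -
  have i: "f integrable_on {-2..-1}" "f integrable_on {-1..0}" "g integrable_on {-2..-1}" "g integrable_on {-1..0}"
    using cont_sub_int[OF f] cont_sub_int[OF g] by auto
  have e: "integral S (\<lambda>t. a * f t + g t) = a * integral S f + integral S g"
    if "f integrable_on S" "g integrable_on S" for S
  proof -
    have "((\<lambda>t. a * f t + g t) has_integral (a * integral S f + integral S g)) S"
      using that by (intro has_integral_add has_integral_mult_right) (auto simp: has_integral_integral)
    then show ?thesis by (rule integral_unique)
  qed
  show ?thesis unfolding Phi_def e[OF i(1) i(3)] e[OF i(2) i(4)] by (simp add: algebra_simps)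
qed

lemma Phi_scale: "Phi c (\<lambda>t. a * f t) = a * Phi c f"
  unfolding Phi_def by (simp add: integral_mult_right algebra_simps)

definition JJ :: "real \<Rightarrow> (real \<Rightarrow> complex) \<Rightarrow> real \<Rightarrow> complex" where
  "JJ m k t = integral {-2..t} (\<lambda>s. ee m (-s) * k s)"
definition FF :: "real \<Rightarrow> (real \<Rightarrow> complex) \<Rightarrow> real \<Rightarrow> complex" where
  "FF m k t = ee m t * (JJ m k 0 - JJ m k t)"
definition DD :: "real \<Rightarrow> real \<Rightarrow> complex" where
  "DD c m = of_real m - Phi c (ee m)"
definition XX :: "real \<Rightarrow> real \<Rightarrow> complex \<Rightarrow> (real \<Rightarrow> complex) \<Rightarrow> complex" where
  "XX c m y k = (y + Phi c (FF m k)) / DD c m"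
definition sol :: "real \<Rightarrow> real \<Rightarrow> complex \<Rightarrow> (real \<Rightarrow> complex) \<Rightarrow> real \<Rightarrow> complex" where
  "sol c m y k t = ee m t * XX c m y k + FF m k t"
definition solg :: "real \<Rightarrow> real \<Rightarrow> complex \<Rightarrow> (real \<Rightarrow> complex) \<Rightarrow> real \<Rightarrow> complex" where
  "solg c m y k t = of_real m * sol c m y k t - k t"

context
  fixes c m :: real and y :: complex and k :: "real \<Rightarrow> complex"
  assumes K: "k absolutely_integrable_on {-2..0}"
begin

lemma q_ai: "(\<lambda>s. ee m (-s) * k s) absolutely_integrable_on {-2..0}"
  by (rule ai_cont_mult[OF _ K]) (unfold ee_def, intro continuous_intros)

lemma JJ_cont: "continuous_on {-2..0} (JJ m k)"
  unfolding JJ_def using q_ai set_lebesgue_integral_eq_integral(1)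
  by (intro indefinite_integral_continuous_1) blast

lemma FF_cont: "continuous_on {-2..0} (FF m k)"
  unfolding FF_def using JJ_cont ee_cont by (intro continuous_intros) auto

lemma sol_cont: "continuous_on {-2..0} (sol c m y k)"
  unfolding sol_def using FF_cont ee_cont by (intro continuous_intros) auto

lemma JJ_m2[simp]: "JJ m k (-2) = 0" by (simp add: JJ_def)

lemma FF_0[simp]: "FF m k 0 = 0" by (simp add: FF_def)

lemma sol_0: "sol c m y k 0 = XX c m y k" by (simp add: sol_def)

lemma Phi_sol: "Phi c (sol c m y k) = XX c m y k * Phi c (ee m) + Phi c (FF m k)"
proof -
  have "sol c m y k = (\<lambda>t. XX c m y k * ee m t + FF m k t)" by (auto simp: sol_def fun_eq_iff mult.commute)
  then show ?thesis using Phi_lin[OF ee_cont FF_cont] by simp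
qed

lemma sol_fst: "DD c m \<noteq> 0 \<Longrightarrow> of_real m * XX c m y k - Phi c (sol c m y k) = y"
proof -
  assume D: "DD c m \<noteq> 0"
  have h: "XX c m y k * DD c m = y + Phi c (FF m k)" using D by (simp add: XX_def)
  have "of_real m * XX c m y k - Phi c (sol c m y k) = XX c m y k * DD c m - Phi c (FF m k)"
    unfolding Phi_sol DD_def by (simp add: algebra_simps)
  then show ?thesis using h by simp
qed

lemma sol_ident:
  assumes t: "t \<in> {-2..0}"
  shows "sol c m y k t = sol c m y k (-2) + integral {-2..t} (solg c m y k)"
proof -
  define q where "q s = ee m (-s) * k s" for s
  define Q where "Q = JJ m k"
  define X where "X = XX c m y k"
  have sub: "{-2..t} \<subseteq> {-2..0}" using t by auto
  have qai: "q absolutely_integrable_on {-2..t}" unfolding q_def by (rule ai_sub_ai[OF q_ai sub])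
  have Qc: "continuous_on {-2..t} Q" unfolding Q_def by (rule continuous_on_subset[OF JJ_cont sub])
  have kint: "k integrable_on {-2..t}" by (rule ai_sub[OF K sub])
  have qint: "q integrable_on {-2..t}" using qai set_lebesgue_integral_eq_integral(1) by blast
  have eq1: "solg c m y k s = of_real m * ee m s * (X + Q 0) - (of_real m * ee m s * Q s + k s)" for s
    by (simp add: solg_def sol_def FF_def X_def Q_def algebra_simps)
  have I1: "integral {-2..t} (\<lambda>s. of_real m * ee m s * (X + Q 0)) = (ee m t - ee m (-2)) * (X + Q 0)"
  proof -
    have "((\<lambda>s. of_real m * ee m s) has_integral (ee m t - ee m (-2))) {-2..t}"
      by (rule fundamental_theorem_of_calculus) (use t ee_deriv in auto)
    then have "((\<lambda>s. of_real m * ee m s * (X + Q 0)) has_integral (ee m t - ee m (-2)) * (X + Q 0)) {-2..t}"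
      by (rule has_integral_mult_left)
    then show ?thesis by (rule integral_unique)
  qed
  have I2: "integral {-2..t} (\<lambda>s. of_real m * ee m s * Q s) = ee m t * Q t - integral {-2..t} k"
  proof -
    have "integral {-2..t} (\<lambda>s. (of_real m * ee m s) * integral {-2..s} q) = integral {-2..t} (\<lambda>r. q r * (ee m t - ee m r))"
      by (rule ibp[OF qai]) (auto intro!: continuous_intros ee_cont ee_deriv)
    also have "\<dots> = integral {-2..t} (\<lambda>r. q r * ee m t - k r)"
      by (rule integral_cong) (simp add: q_def algebra_simps ee_mult)
    also have "\<dots> = integral {-2..t} q * ee m t - integral {-2..t} k"
    proof -
      have "((\<lambda>r. q r * ee m t - k r) has_integral (integral {-2..t} q * ee m t - integral {-2..t} k)) {-2..t}"
        using qint kint by (intro has_integral_diff has_integral_mult_left) (auto simp: has_integral_integral)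
      then show ?thesis by (rule integral_unique)
    qed
    finally have *: "integral {-2..t} (\<lambda>s. of_real m * ee m s * integral {-2..s} q) = integral {-2..t} q * ee m t - integral {-2..t} k" .
    have QQ: "\<And>s. Q s = integral {-2..s} q" by (simp add: Q_def JJ_def q_def[abs_def])
    show ?thesis unfolding QQ * by (simp add: mult.commute)
  qed
  have c1: "(\<lambda>s. of_real m * ee m s * (X + Q 0)) integrable_on {-2..t}"
    by (rule integrable_continuous_interval) (intro continuous_intros ee_cont)
  have c2: "(\<lambda>s. of_real m * ee m s * Q s) integrable_on {-2..t}"
    by (rule integrable_continuous_interval) (intro continuous_intros ee_cont Qc)
  have "integral {-2..t} (solg c m y k) = (ee m t - ee m (-2)) * (X + Q 0) - (ee m t * Q t - integral {-2..t} k + integral {-2..t} k)"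
    unfolding eq1 using c1 c2 kint I1 I2 by (simp add: integral_diff integral_add integrable_add)
  then show ?thesis
    by (simp add: sol_def FF_def X_def Q_def algebra_simps)
qed

lemma W11_sol: "W11_rep (sol c m y k) (solg c m y k)"
  unfolding W11_rep_def
proof
  show "solg c m y k absolutely_integrable_on {-2..0}"
    unfolding solg_def
    by (intro set_integral_diff(1) K ai_cont_mult sol_cont continuous_intros cont_ai)
  show "\<forall>t\<in>{- 2..0}. sol c m y k t = sol c m y k (- 2) + integral {- 2..t} (solg c m y k)"
    using sol_ident by blast
qed

end

lemma Phi_cong: "(\<And>t. t \<in> {-2..0} \<Longrightarrow> f t = g t) \<Longrightarrow> Phi c f = Phi c g"
proof -
  assume h: "\<And>t. t \<in> {-2..0} \<Longrightarrow> f t = g t"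
  have "integral {-2..-1} f = integral {-2..-1} g" by (rule integral_cong) (use h in auto)
  moreover have "integral {-1..0} f = integral {-1..0} g" by (rule integral_cong) (use h in auto)
  ultimately show ?thesis unfolding Phi_def using h[of "-2"] h[of 0] by simp
qed

context
  fixes c m :: real and y :: complex and k :: "real \<Rightarrow> complex"
  assumes K: "k absolutely_integrable_on {-2..0}" and D: "DD c m \<noteq> 0"
begin

lemma exist:
  "A_graph c (XX c m y k, sol c m y k) (Phi c (sol c m y k), solg c m y k) \<and>
   diffE (scaleE (of_real m) (XX c m y k, sol c m y k)) (Phi c (sol c m y k), solg c m y k) = (y, k)"
proof
  show "A_graph c (XX c m y k, sol c m y k) (Phi c (sol c m y k), solg c m y k)"
    unfolding A_graph_def inE_def
    using cont_ai[OF sol_cont[OF K]] W11_sol[OF K] sol_0[OF K]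
    by (intro conjI exI[of _ "sol c m y k"] exI[of _ "solg c m y k"]) (auto simp: eqE_refl)
  show "diffE (scaleE (of_real m) (XX c m y k, sol c m y k)) (Phi c (sol c m y k), solg c m y k) = (y, k)"
    using sol_fst[OF K D] by (simp add: diffE_def scaleE_def solg_def)
qed

lemma uniq:
  assumes G: "A_graph c v w" and E: "eqE (diffE (scaleE (of_real m) v) w) (y, k)"
  shows "eqE v (XX c m y k, sol c m y k)"
proof -
  obtain f1 g1 where W: "W11_rep f1 g1" and ev: "eqE v (f1 0, f1)" and ew: "eqE w (Phi c f1, g1)"
    using G unfolding A_graph_def by blast
  have g1ai: "g1 absolutely_integrable_on {-2..0}" and f1eq: "\<And>t. t \<in> {-2..0} \<Longrightarrow> f1 t = f1 (-2) + integral {-2..t} g1"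
    using W unfolding W11_rep_def by blast+
  have fst1: "of_real m * f1 0 - Phi c f1 = y"
    using E ev ew by (simp add: eqE_def diffE_def scaleE_def)
  have "AE s in lborel. s \<in> {-2..0} \<longrightarrow> g1 s = of_real m * f1 s - k s"
  proof -
    have "AE s in lborel. (s \<in> {-2..0} \<longrightarrow> of_real m * snd v s - snd w s = k s) \<and>
       (s \<in> {-2..0} \<longrightarrow> snd v s = f1 s) \<and> (s \<in> {-2..0} \<longrightarrow> snd w s = g1 s)"
      using E ev ew unfolding eqE_def diffE_def scaleE_def by (simp add: AE_conjI)
    then show ?thesis by (rule eventually_mono) (auto simp: diff_eq_eq eq_diff_eq add.commute)
  qed
  note AEg = this
  have f1c: "continuous_on {-2..0} f1"
  proof -
    have "continuous_on {-2..0} (\<lambda>t. f1 (-2) + integral {-2..t} g1)"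
      using g1ai set_lebesgue_integral_eq_integral(1)
      by (intro continuous_intros indefinite_integral_continuous_1) blast
    then show ?thesis by (rule continuous_on_eq) (simp add: f1eq[symmetric])
  qed
  define s0 where "s0 = sol c m y k"
  have s0c: "continuous_on {-2..0} s0" unfolding s0_def by (rule sol_cont[OF K])
  have s0eq: "s0 t = s0 (-2) + integral {-2..t} (\<lambda>s. of_real m * s0 s - k s)" if "t \<in> {-2..0}" for t
    using sol_ident[OF K that] unfolding s0_def solg_def .
  have f1eq2: "f1 t = f1 (-2) + integral {-2..t} (\<lambda>s. of_real m * f1 s - k s)" if t: "t \<in> {-2..0}" for t
  proof -
    have "integral {-2..t} g1 = integral {-2..t} (\<lambda>s. of_real m * f1 s - k s)"
      by (rule AE_int_eq[OF AEg]) (use t in auto)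
    then show ?thesis using f1eq[OF t] by simp
  qed
  define d where "d t = f1 t - s0 t" for t
  have dc: "continuous_on {-2..0} d" unfolding d_def using f1c s0c by (intro continuous_intros)
  have deq: "d t = d (-2) + of_real m * integral {-2..t} d" if t: "t \<in> {-2..0}" for t
  proof -
    have sub: "{-2..t} \<subseteq> {-2..0}" using t by auto
    have i1: "f1 integrable_on {-2..t}" "s0 integrable_on {-2..t}"
      using cont_sub_int[OF f1c sub] cont_sub_int[OF s0c sub] by auto
    have i2: "k integrable_on {-2..t}" by (rule ai_sub[OF K sub])
    have "integral {-2..t} (\<lambda>s. of_real m * f1 s - k s) - integral {-2..t} (\<lambda>s. of_real m * s0 s - k s)
        = of_real m * integral {-2..t} d"
    proof -
      have a1: "integral {-2..t} (\<lambda>s. of_real m * f1 s - k s) = of_real m * integral {-2..t} f1 - integral {-2..t} k"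
        using i1 i2 by (intro integral_unique has_integral_diff has_integral_mult_right) (auto simp: has_integral_integral)
      have a2: "integral {-2..t} (\<lambda>s. of_real m * s0 s - k s) = of_real m * integral {-2..t} s0 - integral {-2..t} k"
        using i1 i2 by (intro integral_unique has_integral_diff has_integral_mult_right) (auto simp: has_integral_integral)
      have a3: "integral {-2..t} d = integral {-2..t} f1 - integral {-2..t} s0"
        unfolding d_def using i1 by (intro integral_diff) auto
      show ?thesis unfolding a1 a2 a3 by (simp add: algebra_simps)
    qed
    then show ?thesis using f1eq2[OF t] s0eq[OF t] unfolding d_def by (simp add: algebra_simps)
  qed
  have dform: "d t = ee m (t+2) * d (-2)" if "t \<in> {-2..0}" for t
    by (rule ode_unique[OF dc deq that])
  have Phid: "Phi c d = (ee m 2 * d (-2)) * Phi c (ee m)"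
  proof -
    have "Phi c d = Phi c (\<lambda>t. (ee m 2 * d (-2)) * ee m t)"
    proof (rule Phi_cong)
      fix t :: real assume t: "t \<in> {-2..0}"
      have "ee m 2 * ee m t = ee m (t+2)" by (simp add: ee_mult add.commute)
      then show "d t = ee m 2 * d (- 2) * ee m t" unfolding dform[OF t] by (simp add: algebra_simps)
    qed
    then show ?thesis by (simp add: Phi_scale)
  qed
  have f1s: "f1 = (\<lambda>t. 1 * d t + s0 t)" by (simp add: d_def fun_eq_iff)
  have Phif1: "Phi c f1 = Phi c d + Phi c s0"
    by (subst f1s, subst Phi_lin[OF dc s0c]) simp
  have fst0: "of_real m * s0 0 - Phi c s0 = y"
    using sol_fst[OF K D] sol_0[OF K] unfolding s0_def by simp
  have "of_real m * d 0 - Phi c d = 0"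
    using fst1 fst0 Phif1 unfolding d_def by (simp add: algebra_simps)
  then have "(ee m 2 * d (-2)) * DD c m = 0"
  proof -
    have "d 0 = ee m 2 * d (-2)" using dform[of 0] by simp
    then show ?thesis using \<open>of_real m * d 0 - Phi c d = 0\<close> unfolding Phid DD_def by (simp add: algebra_simps)
  qed
  then have "d (-2) = 0" using D by (simp add: ee_def)
  then have dz: "\<And>t. t \<in> {-2..0} \<Longrightarrow> f1 t = s0 t"
  proof -
    fix t :: real assume "d (-2) = 0" "t \<in> {-2..0}"
    then have "d t = 0" using dform[of t] by simp
    then show "f1 t = s0 t" unfolding d_def by simp
  qed
  show ?thesis
  proof -
    have "fst v = XX c m y k" using ev dz[of 0] sol_0[OF K] unfolding s0_def eqE_def by simp
    moreover have "AE s in lborel. s \<in> {-2..0} \<longrightarrow> snd v s = sol c m y k s"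
      using ev unfolding eqE_def by (rule_tac eventually_mono[OF conjunct2[OF ev[unfolded eqE_def]]]) (simp add: dz s0_def)
    ultimately show ?thesis unfolding eqE_def by simp
  qed
qed

end

lemma ee_norm: "\<bar>s\<bar> \<le> 2 \<Longrightarrow> norm (ee m s) \<le> exp (2 * \<bar>m\<bar>)"
proof -
  assume s: "\<bar>s\<bar> \<le> 2"
  have "m * s \<le> 2 * \<bar>m\<bar>"
  proof -
    have "m * s \<le> \<bar>m\<bar> * \<bar>s\<bar>" by (metis abs_ge_self abs_mult)
    also have "\<dots> \<le> \<bar>m\<bar> * 2" using s by (intro mult_left_mono) auto
    finally show ?thesis by simp
  qed
  then show ?thesis by (simp add: ee_def)
qed

lemma norm_int_le:
  fixes f :: "real \<Rightarrow> complex"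
  assumes "f absolutely_integrable_on {a..b}"
  shows "norm (integral {a..b} f) \<le> integral {a..b} (\<lambda>s. norm (f s))"
  using assms unfolding absolutely_integrable_on_def
  by (intro integral_norm_bound_integral) auto

context
  fixes c m :: real and y :: complex and k :: "real \<Rightarrow> complex"
  assumes K: "k absolutely_integrable_on {-2..0}" and D: "DD c m \<noteq> 0"
begin

definition "Ku = integral {-2..0} (\<lambda>s. norm (k s))"
definition "e2 = exp (2 * \<bar>m\<bar>)"

lemma Ku_nn: "0 \<le> Ku"
  unfolding Ku_def by (rule integral_nonneg) (use K in \<open>auto simp: absolutely_integrable_on_def\<close>)

lemma e2_pos: "0 < e2" by (simp add: e2_def)

lemma JJ_bound: "t \<in> {-2..0} \<Longrightarrow> norm (JJ m k t) \<le> e2 * Ku"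
proof -
  assume t: "t \<in> {-2..0}"
  define q where "q s = ee m (-s) * k s" for s
  have qa: "q absolutely_integrable_on {-2..0}" unfolding q_def by (rule q_ai[OF K])
  have nq: "(\<lambda>s. norm (q s)) integrable_on {-2..0}" using qa absolutely_integrable_on_def by blast
  have nk: "(\<lambda>s. norm (k s)) integrable_on {-2..0}" using K absolutely_integrable_on_def by blast
  have "norm (JJ m k t) \<le> integral {-2..t} (\<lambda>s. norm (q s))"
    unfolding JJ_def q_def[symmetric] by (rule norm_int_le[OF ai_sub_ai[OF qa]]) (use t in auto)
  also have "\<dots> \<le> integral {-2..0} (\<lambda>s. norm (q s))"
    by (rule integral_subset_le) (use t nq in \<open>auto intro: integrable_on_subinterval\<close>)
  also have "\<dots> \<le> integral {-2..0} (\<lambda>s. e2 * norm (k s))"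
  proof (rule integral_le[OF nq])
    show "(\<lambda>s. e2 * norm (k s)) integrable_on {-2..0}" using nk by (rule integrable_on_mult_right)
    fix s :: real assume "s \<in> {-2..0}"
    then have "norm (ee m (-s)) \<le> e2" unfolding e2_def by (intro ee_norm) auto
    then show "norm (q s) \<le> e2 * norm (k s)" unfolding q_def norm_mult by (intro mult_right_mono) auto
  qed
  also have "\<dots> = e2 * Ku" by (simp add: Ku_def)
  finally show ?thesis .
qed

definition "B2 = e2 * (2 * e2 * Ku)"

lemma FF_bound: "t \<in> {-2..0} \<Longrightarrow> norm (FF m k t) \<le> B2"
proof -
  assume t: "t \<in> {-2..0}"
  have "norm (JJ m k 0 - JJ m k t) \<le> 2 * e2 * Ku"
    using JJ_bound[of 0] JJ_bound[OF t] norm_triangle_ineq4[of "JJ m k 0" "JJ m k t"] by simp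
  moreover have "norm (ee m t) \<le> e2" unfolding e2_def by (rule ee_norm) (use t in auto)
  ultimately show ?thesis unfolding FF_def B2_def norm_mult
    by (intro mult_mono) (auto simp: e2_pos less_imp_le)
qed

lemma B2_nn: "0 \<le> B2" unfolding B2_def using e2_pos Ku_nn by simp

lemma Phi_FF_bound: "norm (Phi c (FF m k)) \<le> \<bar>c\<bar> * (3 * B2)"
proof -
  have i1: "norm (integral {-2..-1} (FF m k)) \<le> B2 * (-1 - -2)"
    by (rule integral_bound) (auto intro: continuous_on_subset[OF FF_cont[OF K]] FF_bound)
  have i2: "norm (integral {-1..0} (FF m k)) \<le> B2 * (0 - -1)"
    by (rule integral_bound) (auto intro: continuous_on_subset[OF FF_cont[OF K]] FF_bound)
  have i3: "norm (FF m k (-2)) \<le> B2" by (rule FF_bound) auto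
  have "norm (integral {-2..-1} (FF m k) - integral {-1..0} (FF m k) + FF m k (-2) - FF m k 0)
      \<le> norm (integral {-2..-1} (FF m k)) + norm (integral {-1..0} (FF m k)) + norm (FF m k (-2))"
  proof -
    let ?a = "integral {-2..-1} (FF m k)" and ?b = "integral {-1..0} (FF m k)" and ?d = "FF m k (-2)"
    have "norm (?a - ?b + ?d) \<le> norm (?a - ?b) + norm ?d" by (rule norm_triangle_ineq)
    also have "\<dots> \<le> norm ?a + norm ?b + norm ?d" using norm_triangle_ineq4[of ?a ?b] by simp
    finally show ?thesis using FF_0[OF K] by simp
  qed
  also have "\<dots> \<le> 3 * B2" using i1 i2 i3 by simp
  finally have "norm (integral {-2..-1} (FF m k) - integral {-1..0} (FF m k) + FF m k (-2) - FF m k 0) \<le> 3 * B2" .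
  then show ?thesis unfolding Phi_def norm_mult norm_of_real by (intro mult_left_mono) auto
qed

definition "Mb = (1 + 2 * e2) * (1 + 6 * \<bar>c\<bar> * e2 * e2) / norm (DD c m) + 4 * e2 * e2"

lemma sol_bound: "normE (XX c m y k, sol c m y k) \<le> Mb * (norm y + Ku)"
proof -
  define X where "X = XX c m y k"
  have dpos: "0 < norm (DD c m)" using D by simp
  have X: "norm X \<le> (norm y + \<bar>c\<bar> * (3 * B2)) / norm (DD c m)"
  proof -
    have "norm X = norm (y + Phi c (FF m k)) / norm (DD c m)" by (simp add: X_def XX_def norm_divide)
    also have "\<dots> \<le> (norm y + \<bar>c\<bar> * (3 * B2)) / norm (DD c m)"
      using dpos Phi_FF_bound norm_triangle_ineq[of y "Phi c (FF m k)"]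
      by (intro divide_right_mono) auto
    finally show ?thesis .
  qed
  have sb: "norm (sol c m y k t) \<le> e2 * norm X + B2" if t: "t \<in> {-2..0}" for t
  proof -
    have "norm (ee m t) \<le> e2" unfolding e2_def by (rule ee_norm) (use t in auto)
    then have "norm (ee m t * X) \<le> e2 * norm X" unfolding norm_mult by (intro mult_right_mono) auto
    then show ?thesis unfolding sol_def X_def[symmetric] using FF_bound[OF t] norm_triangle_ineq[of "ee m t * X" "FF m k t"] by simp
  qed
  have "integral {-2..0} (\<lambda>t. norm (sol c m y k t)) \<le> (e2 * norm X + B2) * (0 - -2)"
  proof -
    have "norm (integral {-2..0} (\<lambda>t. norm (sol c m y k t))) \<le> (e2 * norm X + B2) * (0 - -2)"
      by (rule integral_bound) (auto intro: continuous_intros sol_cont[OF K] sb)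
    then show ?thesis by simp
  qed
  then have "normE (XX c m y k, sol c m y k) \<le> norm X + 2 * (e2 * norm X + B2)"
    unfolding normE_def X_def by simp
  also have "\<dots> = (1 + 2 * e2) * norm X + 2 * B2" by (simp add: algebra_simps)
  also have "\<dots> \<le> (1 + 2 * e2) * ((norm y + \<bar>c\<bar> * (3 * B2)) / norm (DD c m)) + 2 * B2"
    using X e2_pos by (intro add_right_mono mult_left_mono) auto
  also have "\<dots> = (1 + 2 * e2) / norm (DD c m) * norm y + ((1 + 2 * e2) * (6 * \<bar>c\<bar> * e2 * e2) / norm (DD c m) + 4 * e2 * e2) * Ku"
    unfolding B2_def using dpos by (simp add: field_simps)
  also have "\<dots> \<le> Mb * norm y + Mb * Ku"
  proof (rule add_mono)
    have "(1 + 2 * e2) / norm (DD c m) \<le> (1 + 2 * e2) * (1 + 6 * \<bar>c\<bar> * e2 * e2) / norm (DD c m)"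
      using dpos e2_pos by (intro divide_right_mono) (auto simp: algebra_simps)
    moreover have "0 \<le> 4 * e2 * e2" using e2_pos by simp
    ultimately have "(1 + 2 * e2) / norm (DD c m) \<le> Mb" unfolding Mb_def by linarith
    then show "(1 + 2 * e2) / norm (DD c m) * norm y \<le> Mb * norm y"
      by (intro mult_right_mono) auto
    have "(1 + 2 * e2) * (6 * \<bar>c\<bar> * e2 * e2) / norm (DD c m) \<le> (1 + 2 * e2) * (1 + 6 * \<bar>c\<bar> * e2 * e2) / norm (DD c m)"
      using dpos e2_pos by (intro divide_right_mono mult_left_mono) auto
    then show "((1 + 2 * e2) * (6 * \<bar>c\<bar> * e2 * e2) / norm (DD c m) + 4 * e2 * e2) * Ku \<le> Mb * Ku"
      unfolding Mb_def using Ku_nn by (intro mult_right_mono) auto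
  qed
  finally show ?thesis by (simp add: algebra_simps)
qed

end

lemma zero_sol: "XX c m 0 (\<lambda>_. 0) = 0" "sol c m 0 (\<lambda>_. 0) = (\<lambda>_. 0)"
proof -
  have J: "JJ m (\<lambda>_. 0) = (\<lambda>_. 0)" by (simp add: JJ_def fun_eq_iff)
  have F: "FF m (\<lambda>_. 0) = (\<lambda>_. 0)" by (simp add: FF_def J fun_eq_iff)
  have P: "Phi c (\<lambda>_. 0) = 0" by (simp add: Phi_def)
  show X: "XX c m 0 (\<lambda>_. 0) = 0" by (simp add: XX_def F P)
  show "sol c m 0 (\<lambda>_. 0) = (\<lambda>_. 0)" by (simp add: sol_def X F fun_eq_iff)
qed

lemma graph_snd_ai:
  assumes "A_graph c v w"
  shows "snd w absolutely_integrable_on {-2..0}"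
proof -
  obtain f g where W: "W11_rep f g" and ew: "eqE w (Phi c f, g)" using assms unfolding A_graph_def by blast
  have "g absolutely_integrable_on {-2..0}" using W unfolding W11_rep_def by blast
  moreover have "AE s in lborel. s \<in> {-2..0} \<longrightarrow> snd w s = g s" using ew unfolding eqE_def by simp
  ultimately show ?thesis using AE_ai by blast
qed

lemma diff_ai:
  assumes "A_graph c v w"
  shows "snd (diffE (scaleE (of_real m) v) w) absolutely_integrable_on {-2..0}"
proof -
  have "snd v absolutely_integrable_on {-2..0}" using assms unfolding A_graph_def inE_def by blast
  then have "(\<lambda>s. of_real m * snd v s) absolutely_integrable_on {-2..0}"
    by (rule ai_cont_mult[where f="\<lambda>_. of_real m", OF continuous_on_const])
  then show ?thesis using graph_snd_ai[OF assms] unfolding diffE_def scaleE_def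
    by (simp add: set_integral_diff(1))
qed

lemma normE_cong: "eqE v w \<Longrightarrow> normE v = normE w"
proof -
  assume e: "eqE v w"
  have "AE s in lborel. s \<in> {-2..0} \<longrightarrow> cmod (snd v s) = cmod (snd w s)"
    using e unfolding eqE_def by (auto elim: eventually_mono)
  then have "integral {-2..0} (\<lambda>s. cmod (snd v s)) = integral {-2..0} (\<lambda>s. cmod (snd w s))"
  proof -
    assume a: "AE s in lborel. s \<in> {-2..0} \<longrightarrow> cmod (snd v s) = cmod (snd w s)"
    obtain N where N: "negligible N" "\<And>s. s \<in> {-2..0} - N \<Longrightarrow> cmod (snd v s) = cmod (snd w s)"
    proof -
      from AE_E[OF a] obtain N where N: "{x \<in> space lborel. \<not> (x \<in> {-2..0} \<longrightarrow> cmod (snd v x) = cmod (snd w x))} \<subseteq> N"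
        "emeasure lborel N = 0" "N \<in> sets lborel" .
      have "N \<in> null_sets lebesgue" using N by (intro null_sets_completionI) (simp add: null_sets_def)
      then have "negligible N" by (simp add: negligible_iff_null_sets)
      then show ?thesis using N(1) that by auto
    qed
    show ?thesis by (rule integral_spike[OF N(1)]) (use N(2) in auto)
  qed
  then show ?thesis using e unfolding normE_def eqE_def by simp
qed

lemma in_res:
  assumes D: "DD c m \<noteq> 0"
  shows "in_resolvent_set c (of_real m)"
  unfolding in_resolvent_set_def
proof (intro conjI allI impI)
  fix h assume h: "inE h"
  have K: "snd h absolutely_integrable_on {-2..0}" using h unfolding inE_def .
  show "\<exists>v w. A_graph c v w \<and> eqE (diffE (scaleE (of_real m) v) w) h"
    using exist[OF K D, of "fst h"] by (intro exI) (auto simp: eqE_refl)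
next
  fix v w assume a: "A_graph c v w \<and> eqE (diffE (scaleE (complex_of_real m) v) w) (0, \<lambda>_. 0)"
  then have "eqE v (XX c m 0 (\<lambda>_. 0), sol c m 0 (\<lambda>_. 0))"
    by (intro uniq[OF _ D]) auto
  then show "eqE v (0, \<lambda>_. 0)" by (simp add: zero_sol)
next
  show "\<exists>M. \<forall>v w. A_graph c v w \<longrightarrow> normE v \<le> M * normE (diffE (scaleE (of_real m) v) w)"
  proof (intro exI allI impI)
    fix v w assume G: "A_graph c v w"
    define h where "h = diffE (scaleE (of_real m) v) w"
    have K: "snd h absolutely_integrable_on {-2..0}" unfolding h_def by (rule diff_ai[OF G])
    have "eqE (diffE (scaleE (of_real m) v) w) (fst h, snd h)" by (simp add: h_def eqE_refl)
    then have "eqE v (XX c m (fst h) (snd h), sol c m (fst h) (snd h))" by (rule uniq[OF K D G])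
    then have "normE v = normE (XX c m (fst h) (snd h), sol c m (fst h) (snd h))" by (rule normE_cong)
    also have "\<dots> \<le> Mb c m * (norm (fst h) + Ku (snd h))" by (rule sol_bound[OF K D])
    also have "norm (fst h) + Ku (snd h) = normE h" by (simp add: normE_def Ku_def[OF K D])
    finally show "normE v \<le> Mb c m * normE (diffE (scaleE (of_real m) v) w)" by (simp add: h_def)
  qed
qed

lemma ai_cont_mult_r:
  fixes f g :: "real \<Rightarrow> real"
  assumes "continuous_on {a..b} f" "g absolutely_integrable_on {a..b}"
  shows "(\<lambda>x. f x * g x) absolutely_integrable_on {a..b}"
  by (rule absolutely_integrable_bounded_measurable_product_real)
     (auto intro: continuous_imp_measurable_on_sets_lebesgue compact_imp_bounded compact_continuous_image assms)

lemma ai_int_r: "(f::real\<Rightarrow>real) absolutely_integrable_on {a..b} \<Longrightarrow> {c..d} \<subseteq> {a..b} \<Longrightarrow> f integrable_on {c..d}"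
proof -
  assume a: "f absolutely_integrable_on {a..b}" "{c..d} \<subseteq> {a..b}"
  have "f absolutely_integrable_on {c..d}" by (rule set_integrable_subset[OF a(1)]) (use a(2) in auto)
  then show ?thesis using set_lebesgue_integral_eq_integral(1) by blast
qed

lemma exp_bounds: "\<bar>z::real\<bar> \<le> 1/5 \<Longrightarrow> 4/5 \<le> exp z \<and> exp z \<le> 5/4"
proof -
  assume z: "\<bar>z\<bar> \<le> 1/5"
  have a: "1 + z \<le> exp z" by (rule exp_ge_add_one_self)
  have b: "1 + (-z) \<le> exp (-z)" by (rule exp_ge_add_one_self)
  have "exp z * exp (-z) = 1" by (simp add: exp_minus)
  then have "exp z = 1 / exp (-z)" by (simp add: field_simps)
  also have "\<dots> \<le> 1 / (4/5)" using b z by (intro divide_left_mono) auto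
  finally have "exp z \<le> 5/4" by simp
  moreover have "4/5 \<le> exp z"
  proof -
    have "-1/5 \<le> z" using z by (simp add: abs_le_iff)
    then show ?thesis using a by linarith
  qed
  ultimately show ?thesis by blast
qed

context
  fixes c m yr :: real and kp :: "real \<Rightarrow> real"
  assumes cpos: "0 < c" and kp0: "\<And>s. 0 \<le> kp s" and kpi: "kp absolutely_integrable_on {-2..0}"
    and yr0: "0 \<le> yr" and m1: "\<bar>m\<bar> < 1/10"
begin

definition "Jr t = integral {-2..t} (\<lambda>s. exp (m * (-s)) * kp s)"
definition "Fr t = exp (m * t) * (Jr 0 - Jr t)"
definition "Gr t = integral {t..0} kp"
definition "Pr = c * (integral {-2..-1} Fr - integral {-1..0} Fr + Fr (-2) - Fr 0)"
definition "Dr = m - c * (integral {-2..-1} (\<lambda>s. exp (m * s)) - integral {-1..0} (\<lambda>s. exp (m * s)) + exp (m * (-2)) - exp (m * 0))"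
definition "xr = (yr + Pr) / Dr"
definition "phr = yr + c * Gr (-2)"

lemma qr_ai: "(\<lambda>s. exp (m * (-s)) * kp s) absolutely_integrable_on {-2..0}"
  by (rule ai_cont_mult_r[OF _ kpi]) (intro continuous_intros)

lemma qr_int: "{a..b} \<subseteq> {-2..0} \<Longrightarrow> (\<lambda>s. exp (m * (-s)) * kp s) integrable_on {a..b}"
  by (rule ai_int_r[OF qr_ai])

lemma kp_int: "{a..b} \<subseteq> {-2..0} \<Longrightarrow> kp integrable_on {a..b}"
  by (rule ai_int_r[OF kpi])

lemma Jr_cont: "continuous_on {-2..0} Jr"
  unfolding Jr_def by (rule indefinite_integral_continuous_1) (rule qr_int, auto)

lemma Fr_cont: "continuous_on {-2..0} Fr"
  unfolding Fr_def using Jr_cont by (intro continuous_intros) auto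

lemma Gr_cont: "continuous_on {-2..0} Gr"
  unfolding Gr_def by (rule indefinite_integral_continuous_1') (rule kp_int, auto)

lemma Gr_nn: "t \<in> {-2..0} \<Longrightarrow> 0 \<le> Gr t"
  unfolding Gr_def by (rule integral_nonneg) (auto intro: kp_int kp0)

lemma real_cont_int: "continuous_on {a..b} f \<Longrightarrow> {p..q} \<subseteq> {a..b} \<Longrightarrow> (f::real\<Rightarrow>real) integrable_on {p..q}"
  by (meson continuous_on_subset integrable_continuous_interval)

lemma Fr0: "Fr 0 = 0" by (simp add: Fr_def)

lemma Fr_int:
  assumes t: "t \<in> {-2..0}"
  shows "Fr t = integral {t..0} (\<lambda>s. exp (m*t) * (exp (m*(-s)) * kp s))"
proof -
  have "integral {-2..t} (\<lambda>s. exp (m * (-s)) * kp s) + integral {t..0} (\<lambda>s. exp (m * (-s)) * kp s)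
      = integral {-2..0} (\<lambda>s. exp (m * (-s)) * kp s)"
    by (rule Henstock_Kurzweil_Integration.integral_combine) (use t qr_int in auto)
  then have "Jr 0 - Jr t = integral {t..0} (\<lambda>s. exp (m * (-s)) * kp s)" by (simp add: Jr_def algebra_simps)
  then show ?thesis by (simp add: Fr_def)
qed

lemma Fr_bounds:
  assumes t: "t \<in> {-2..0}"
  shows "4/5 * Gr t \<le> Fr t \<and> Fr t \<le> 5/4 * Gr t"
proof -
  have sub: "{t..0} \<subseteq> {-2..0}" using t by auto
  have ki: "kp integrable_on {t..0}" by (rule kp_int[OF sub])
  have qi: "(\<lambda>s. exp (m*t) * (exp (m*(-s)) * kp s)) integrable_on {t..0}"
    by (rule integrable_on_mult_right[OF qr_int[OF sub]])
  have e: "4/5 \<le> exp (m*t) * exp (m*(-s)) \<and> exp (m*t) * exp (m*(-s)) \<le> 5/4" if s: "s \<in> {t..0}" for s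
  proof -
    have "exp (m*t) * exp (m*(-s)) = exp (m * (t - s))" by (simp add: exp_add[symmetric] algebra_simps)
    moreover have "\<bar>m * (t - s)\<bar> \<le> 1/5"
    proof -
      have "\<bar>m * (t - s)\<bar> = \<bar>m\<bar> * \<bar>t - s\<bar>" by (simp add: abs_mult)
      also have "\<dots> \<le> (1/10) * 2" using m1 s t by (intro mult_mono) auto
      finally show ?thesis by simp
    qed
    ultimately show ?thesis using exp_bounds by simp
  qed
  have "integral {t..0} (\<lambda>s. 4/5 * kp s) \<le> integral {t..0} (\<lambda>s. exp (m*t) * (exp (m*(-s)) * kp s))"
  proof (rule integral_le[OF integrable_on_mult_right[OF ki] qi])
    fix s assume "s \<in> {t..0}"
    then have "4/5 * kp s \<le> (exp (m*t) * exp (m*(-s))) * kp s" using e kp0 by (intro mult_right_mono) auto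
    then show "4/5 * kp s \<le> exp (m*t) * (exp (m*(-s)) * kp s)" by (simp add: mult.assoc)
  qed
  moreover have "integral {t..0} (\<lambda>s. exp (m*t) * (exp (m*(-s)) * kp s)) \<le> integral {t..0} (\<lambda>s. 5/4 * kp s)"
  proof (rule integral_le[OF qi integrable_on_mult_right[OF ki]])
    fix s assume "s \<in> {t..0}"
    then have "(exp (m*t) * exp (m*(-s))) * kp s \<le> 5/4 * kp s" using e kp0 by (intro mult_right_mono) auto
    then show "exp (m*t) * (exp (m*(-s)) * kp s) \<le> 5/4 * kp s" by (simp add: mult.assoc)
  qed
  ultimately show ?thesis unfolding Fr_int[OF t] Gr_def by simp
qed

lemma Gr_anti: "-2 \<le> t1 \<Longrightarrow> t1 \<le> t2 \<Longrightarrow> t2 \<le> 0 \<Longrightarrow> Gr t2 \<le> Gr t1"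
  unfolding Gr_def by (rule integral_subset_le) (auto intro: kp_int kp0)

lemma Pr_lower: "c / 4 * Gr (-2) \<le> Pr"
proof -
  have G12: "Gr (-1) \<le> Gr (-2)" by (rule Gr_anti) auto
  have G2: "0 \<le> Gr (-2)" "0 \<le> Gr (-1)" by (auto intro: Gr_nn)
  have A: "4/5 * Gr (-1) \<le> integral {-2..-1} Fr"
  proof -
    have "integral {-2..-1} (\<lambda>t::real. 4/5 * Gr (-1)) \<le> integral {-2..-1} Fr"
    proof (rule integral_le)
      show "Fr integrable_on {-2..-1}" by (rule real_cont_int[OF Fr_cont]) auto
      fix t :: real assume t: "t \<in> {-2..-1}"
      have "Gr (-1) \<le> Gr t" by (rule Gr_anti) (use t in auto)
      then show "4/5 * Gr (-1) \<le> Fr t" using Fr_bounds[of t] t by auto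
    qed auto
    then show ?thesis by simp
  qed
  have B: "integral {-1..0} Fr \<le> 5/4 * Gr (-1)"
  proof -
    have "integral {-1..0} Fr \<le> integral {-1..0} (\<lambda>t::real. 5/4 * Gr (-1))"
    proof (rule integral_le)
      show "Fr integrable_on {-1..0}" by (rule real_cont_int[OF Fr_cont]) auto
      fix t :: real assume t: "t \<in> {-1..0}"
      have "Gr t \<le> Gr (-1)" by (rule Gr_anti) (use t in auto)
      then show "Fr t \<le> 5/4 * Gr (-1)" using Fr_bounds[of t] t by auto
    qed auto
    then show ?thesis by simp
  qed
  have C: "4/5 * Gr (-2) \<le> Fr (-2)" using Fr_bounds[of "-2"] by auto
  have "7/20 * Gr (-2) \<le> integral {-2..-1} Fr - integral {-1..0} Fr + Fr (-2) - Fr 0"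
    using A B C G12 G2 Fr0 by linarith
  then have "c * (7/20 * Gr (-2)) \<le> Pr" unfolding Pr_def using cpos by (intro mult_left_mono) auto
  moreover have "c / 4 * Gr (-2) \<le> c * (7/20 * Gr (-2))" using cpos G2 by (simp add: field_simps)
  ultimately show ?thesis by linarith
qed

lemma int_exp:
  assumes "m \<noteq> 0" "a \<le> b"
  shows "integral {a..b} (\<lambda>s. exp (m * s)) = (exp (m*b) - exp (m*a)) / m"
proof -
  have "((\<lambda>s. exp (m * s)) has_integral (exp (m*b) / m - exp (m*a) / m)) {a..b}"
  proof (rule fundamental_theorem_of_calculus[OF assms(2)])
    fix x assume "x \<in> {a..b}"
    have "((\<lambda>s. exp (m * s) / m) has_real_derivative (exp (m*x) * (m * 1) / m)) (at x within {a..b})"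
      using assms(1) by (intro derivative_eq_intros) auto
    then show "((\<lambda>s. exp (m * s) / m) has_vector_derivative exp (m*x)) (at x within {a..b})"
      using assms(1) by (simp add: has_real_derivative_iff_has_vector_derivative)
  qed
  then show ?thesis by (simp add: integral_unique diff_divide_distrib)
qed

lemma Dr_form:
  assumes m0: "m \<noteq> 0"
  shows "Dr = m + c * ((1 - exp (-m))^2 / m + (1 - exp (-m)) * (1 + exp (-m)))"
proof -
  define u where "u = exp (-m)"
  have e2: "exp (m * (-2)) = u^2" unfolding u_def by (simp add: power2_eq_square exp_add[symmetric])
  have e1: "exp (m * (-1)) = u" unfolding u_def by simp
  have "Dr = m - c * ((exp (m * (-1)) - exp (m * (-2))) / m - (exp (m*0) - exp (m * (-1))) / m + exp (m * (-2)) - 1)"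
    unfolding Dr_def using m0 by (simp add: int_exp)
  also have "\<dots> = m + c * ((1 - u)^2 / m + (1 - u) * (1 + u))"
    unfolding e1 e2 using m0 by (simp add: field_simps power2_eq_square)
  finally show ?thesis by (simp add: u_def)
qed

lemma Dr_pos:
  assumes m0: "0 < m"
  shows "0 < Dr \<and> Dr \<le> (1 + 3*c) * m"
proof -
  define u where "u = exp (-m)"
  have u1: "u < 1" "0 < u" unfolding u_def using m0 by auto
  have um: "1 - u \<le> m" unfolding u_def using exp_ge_add_one_self[of "-m"] by simp
  have t1: "0 \<le> (1 - u)^2 / m" "(1 - u)^2 / m \<le> m"
  proof -
    show "0 \<le> (1 - u)^2 / m" using m0 by simp
    have "(1 - u)^2 \<le> m^2" using um u1 by (intro power_mono) auto
    then show "(1 - u)^2 / m \<le> m" using m0 by (simp add: field_simps power2_eq_square)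
  qed
  have t2: "0 \<le> (1 - u) * (1 + u)" "(1 - u) * (1 + u) \<le> m * 2"
    using u1 um by (auto intro: mult_mono)
  have D: "Dr = m + c * ((1 - u)^2 / m + (1 - u) * (1 + u))" using Dr_form m0 by (simp add: u_def)
  have "0 \<le> c * ((1 - u)^2 / m + (1 - u) * (1 + u))" using cpos t1 t2 by simp
  moreover have "c * ((1 - u)^2 / m + (1 - u) * (1 + u)) \<le> c * (3 * m)" using cpos t1 t2 by (intro mult_left_mono) auto
  ultimately show ?thesis unfolding D using m0 by (simp add: algebra_simps)
qed

lemma Dr_neg:
  assumes m0: "m < 0"
  shows "Dr < 0 \<and> -((1 + 5*c) * \<bar>m\<bar>) \<le> Dr"
proof -
  define a where "a = -m"
  have a0: "0 < a" "a < 1/10" using m0 m1 by (auto simp: a_def)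
  define u where "u = exp a"
  have u1: "1 < u" unfolding u_def using a0 by simp
  have u2: "u \<le> 5/4" unfolding u_def using exp_bounds[of a] a0 by auto
  have ua: "u - 1 \<le> a * u"
  proof -
    have "1 - a \<le> exp (-a)" using exp_ge_add_one_self[of "-a"] by simp
    then have "(1 - a) * u \<le> exp (-a) * u" using u1 by (intro mult_right_mono) auto
    also have "exp (-a) * u = 1" by (simp add: u_def exp_minus)
    finally show ?thesis by (simp add: algebra_simps)
  qed
  have "a * u \<le> a * (5/4)" using u2 a0 by (intro mult_left_mono) auto
  then have ua2: "u - 1 \<le> 5/4 * a" using ua by linarith
  have "(u - 1) / a \<le> u" using ua a0 by (simp add: divide_le_eq mult.commute)
  then have q: "(u - 1) / a \<le> 5/4" using u2 by linarith
  have t1: "-((u - 1)^2) / a \<le> 0" "-(25/16 * a) \<le> -((u - 1)^2) / a"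
  proof -
    show "-((u - 1)^2) / a \<le> 0" using a0 by simp
    have "(u - 1)^2 / a = (u - 1) * ((u - 1) / a)" by (simp add: power2_eq_square)
    also have "\<dots> \<le> (5/4 * a) * (5/4)" using ua2 q u1 by (intro mult_mono) auto
    finally show "-(25/16 * a) \<le> -((u - 1)^2) / a" by (simp add: field_simps)
  qed
  have t2: "-((u - 1) * (1 + u)) \<le> 0" "-(45/16 * a) \<le> -((u - 1) * (1 + u))"
  proof -
    show "-((u - 1) * (1 + u)) \<le> 0" using u1 by simp
    have "(u - 1) * (1 + u) \<le> (5/4 * a) * (9/4)" using ua2 u1 u2 by (intro mult_mono) auto
    then show "-(45/16 * a) \<le> -((u - 1) * (1 + u))" by simp
  qed
  have D: "Dr = -a + c * (-((u - 1)^2) / a + -((u - 1) * (1 + u)))"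
  proof -
    have "Dr = m + c * ((1 - u)^2 / m + (1 - u) * (1 + u))"
      using Dr_form m0 unfolding u_def a_def by simp
    moreover have "(1 - u)^2 / m = -((u - 1)^2) / a" unfolding a_def by (simp add: power2_commute)
    moreover have "(1 - u) * (1 + u) = -((u - 1) * (1 + u))" by (simp add: algebra_simps)
    moreover have "m = -a" by (simp add: a_def)
    ultimately show ?thesis by simp
  qed
  have "-((u - 1)^2) / a + -((u - 1) * (1 + u)) \<le> 0" using t1(1) t2(1) by linarith
  then have "c * (-((u - 1)^2) / a + -((u - 1) * (1 + u))) \<le> 0" using cpos by (intro mult_nonneg_nonpos) auto
  moreover have "c * (-(70/16 * a)) \<le> c * (-((u - 1)^2) / a + -((u - 1) * (1 + u)))"
    using cpos t1 t2 by (intro mult_left_mono) auto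
  moreover have "c * (-(70/16 * a)) = -(70/16) * (c * a)" by simp
  moreover have "(1 + 5*c) * a = a + 5 * (c * a)" by (simp add: algebra_simps)
  moreover have "0 \<le> c * a" using cpos a0 by simp
  moreover have am: "\<bar>m\<bar> = a" using m0 by (simp add: a_def)
  ultimately show ?thesis unfolding D am using a0 by linarith
qed

lemma phr_nn: "0 \<le> phr" unfolding phr_def using yr0 cpos Gr_nn[of "-2"] by simp

lemma num_lower: "phr / 4 \<le> yr + Pr"
  using Pr_lower yr0 unfolding phr_def by (simp add: field_simps)

lemma pos_case:
  assumes m0: "0 < m"
  defines "\<kappa> \<equiv> 1 / (4 * (1 + 3*c) * m)"
  shows "\<kappa> * phr \<le> xr \<and> (\<forall>t\<in>{-2..0}. \<kappa> / 2 * phr \<le> exp (m*t) * xr + Fr t)"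
proof -
  have D: "0 < Dr" "Dr \<le> (1 + 3*c) * m" using Dr_pos[OF m0] by auto
  have "phr / 4 / Dr \<le> xr" unfolding xr_def using D num_lower by (intro divide_right_mono) auto
  moreover have "phr / 4 / ((1 + 3*c) * m) \<le> phr / 4 / Dr" using D phr_nn by (intro divide_left_mono) auto
  moreover have "\<kappa> * phr = phr / 4 / ((1 + 3*c) * m)" unfolding \<kappa>_def by (simp add: field_simps)
  ultimately have X: "\<kappa> * phr \<le> xr" by linarith
  have kp: "0 \<le> \<kappa>" unfolding \<kappa>_def using m0 cpos by simp
  have "0 \<le> \<kappa> * phr" using kp phr_nn by simp
  then have xr0: "0 \<le> xr" using X by linarith
  have "\<kappa> / 2 * phr \<le> exp (m*t) * xr + Fr t" if t: "t \<in> {-2..0}" for t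
  proof -
    have "\<bar>m * t\<bar> \<le> 1/5"
    proof -
      have "\<bar>m * t\<bar> = \<bar>m\<bar> * \<bar>t\<bar>" by (simp add: abs_mult)
      also have "\<dots> \<le> (1/10) * 2" using m1 t by (intro mult_mono) auto
      finally show ?thesis by simp
    qed
    then have "4/5 \<le> exp (m*t)" using exp_bounds by blast
    then have "4/5 * xr \<le> exp (m*t) * xr" using xr0 by (intro mult_right_mono) auto
    moreover have "0 \<le> Fr t" using Fr_bounds[OF t] Gr_nn[OF t] by linarith
    moreover have "\<kappa> / 2 * phr \<le> 4/5 * xr"
    proof -
      have "\<kappa> / 2 * phr = 1/2 * (\<kappa> * phr)" by simp
      then show ?thesis using X xr0 by linarith
    qed
    ultimately show ?thesis by linarith
  qed
  with X show ?thesis by blast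
qed

lemma neg_case:
  assumes m0: "m < 0" and ms: "\<bar>m\<bar> < c / (10 * (1 + 5*c))"
  shows "xr \<le> -(5 / (4*c)) * phr \<and> (\<forall>t\<in>{-2..0}. exp (m*t) * xr + Fr t \<le> -(5 / (4*c)) * phr)"
proof -
  define a where "a = \<bar>m\<bar>"
  have a0: "0 < a" using m0 by (simp add: a_def)
  have D: "Dr < 0" "-((1 + 5*c) * a) \<le> Dr" using Dr_neg[OF m0] by (auto simp: a_def)
  have c5: "0 < 1 + 5*c" using cpos by simp
  have "xr \<le> phr / 4 / Dr" unfolding xr_def using D num_lower by (intro divide_right_mono_neg) auto
  also have "phr / 4 / Dr = -(phr / 4 / (-Dr))" by simp
  also have "phr / 4 / ((1 + 5*c) * a) \<le> phr / 4 / (-Dr)"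
  proof (rule divide_left_mono)
    show "0 < (1 + 5*c) * a * (-Dr)" using D c5 a0 by (intro mult_pos_pos) auto
  qed (use D phr_nn in auto)
  then have "-(phr / 4 / (-Dr)) \<le> -(phr / 4 / ((1 + 5*c) * a))" by simp
  also have "phr / 4 / ((1 + 5*c) * (c / (10 * (1 + 5*c)))) \<le> phr / 4 / ((1 + 5*c) * a)"
    using phr_nn a0 c5 ms cpos unfolding a_def[symmetric] by (intro divide_left_mono mult_left_mono mult_pos_pos) auto
  then have "-(phr / 4 / ((1 + 5*c) * a)) \<le> -(phr / 4 / ((1 + 5*c) * (c / (10 * (1 + 5*c)))))" by simp
  also have "-(phr / 4 / ((1 + 5*c) * (c / (10 * (1 + 5*c))))) = -(5 / (2*c)) * phr"
  proof -
    have e: "(1 + 5*c) * (c / (10 * (1 + 5*c))) = c / 10" using c5 by (simp add: field_simps)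
    show ?thesis unfolding e using cpos by (simp add: field_simps)
  qed
  finally have X: "xr \<le> -(5 / (2*c)) * phr" .
  have X': "xr \<le> -(5 / (4*c)) * phr"
  proof -
    have "(5 / (4*c)) * phr \<le> (5 / (2*c)) * phr" using cpos phr_nn by (intro mult_right_mono) (auto simp: field_simps)
    then show ?thesis using X by linarith
  qed
  have "0 \<le> (5 / (2*c)) * phr" using cpos phr_nn by simp
  then have xr0: "xr \<le> 0" using X by linarith
  have "exp (m*t) * xr + Fr t \<le> -(5 / (4*c)) * phr" if t: "t \<in> {-2..0}" for t
  proof -
    have "1 \<le> exp (m*t)" using m0 t by (simp add: mult_nonpos_nonpos)
    then have "exp (m*t) * xr \<le> 1 * xr" using xr0 by (intro mult_right_mono_neg) auto
    moreover have "Fr t \<le> 5/4 * Gr (-2)"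
    proof -
      have "Gr t \<le> Gr (-2)" by (rule Gr_anti) (use t in auto)
      then show ?thesis using Fr_bounds[OF t] by linarith
    qed
    moreover have "5/4 * Gr (-2) \<le> (5 / (4*c)) * phr"
      using cpos yr0 unfolding phr_def by (simp add: field_simps)
    moreover have "-(5 / (2*c)) * phr + (5 / (4*c)) * phr = -(5 / (4*c)) * phr"
      using cpos by (simp add: field_simps)
    ultimately show ?thesis using X by linarith
  qed
  with X' show ?thesis by blast
qed

end

lemma int_of_real: "(g::real\<Rightarrow>real) integrable_on S \<Longrightarrow> integral S (\<lambda>x. complex_of_real (g x)) = of_real (integral S g)"
  by (rule integral_unique[OF has_integral_of_real[OF integrable_integral]])

lemma zk: "(\<lambda>_::real. 0::real) absolutely_integrable_on {-2..0}" by simp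

lemma DD_real:
  assumes cpos: "0 < c" and m1: "\<bar>m\<bar> < 1/10"
  shows "DD c m = of_real (Dr c m)"
proof -
  have Dr_eq: "Dr c m = m - c * (integral {-2..-1} (\<lambda>s. exp (m * s)) - integral {-1..0} (\<lambda>s. exp (m * s)) + exp (m * (-2)) - exp (m * 0))"
    using Dr_def[of c "\<lambda>_. 0" 0 m] cpos m1 by simp
  have e: "ee m = (\<lambda>s. of_real (exp (m * s)))" by (simp add: ee_def fun_eq_iff)
  have i: "integral {a..b} (ee m) = of_real (integral {a..b} (\<lambda>s. exp (m * s)))" for a b
    unfolding e by (rule int_of_real) (intro integrable_continuous_interval continuous_intros)
  show ?thesis unfolding DD_def Phi_def Dr_eq i by (simp add: ee_def)
qed

lemma DD_nz:
  assumes cpos: "0 < c" and m1: "\<bar>m\<bar> < 1/10" and m0: "m \<noteq> 0"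
  shows "DD c m \<noteq> 0"
proof -
  have "Dr c m \<noteq> 0"
  proof (cases "0 < m")
    case True
    then show ?thesis using Dr_pos[of c "\<lambda>_. 0" 0 m] cpos m1 by auto
  next
    case False
    then have "m < 0" using m0 by simp
    then show ?thesis using Dr_neg[of c "\<lambda>_. 0" 0 m] cpos m1 by auto
  qed
  then show ?thesis using DD_real[OF cpos m1] by simp
qed

context
  fixes c m :: real and h :: elt
  assumes cpos: "0 < c" and m1: "\<bar>m\<bar> < 1/10" and m0: "m \<noteq> 0" and hE: "inE h" and hP: "posE h"
begin

definition "yrh = Re (fst h)"
definition "kph s = max 0 (Re (snd h s))"
definition "kc s = complex_of_real (kph s)"

lemma yr_props: "fst h = of_real yrh" "0 \<le> yrh"
  using hP unfolding posE_def yrh_def by (auto simp: complex_is_Real_iff complex_eq_iff)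

lemma kc_AE: "AE s in lborel. s \<in> {-2..0} \<longrightarrow> snd h s = kc s"
  using hP unfolding posE_def
  by (auto elim!: eventually_mono simp: kc_def kph_def complex_is_Real_iff complex_eq_iff)

lemma kc_ai: "kc absolutely_integrable_on {-2..0}"
proof -
  have "AE s in lborel. s \<in> {-2..0} \<longrightarrow> kc s = snd h s" using kc_AE by (auto elim: eventually_mono)
  then show ?thesis using hE unfolding inE_def by (rule AE_ai)
qed

lemma kph_ai: "kph absolutely_integrable_on {-2..0}"
proof -
  have "(\<lambda>s. kc s \<bullet> 1) absolutely_integrable_on {-2..0}" by (rule absolutely_integrable_component[OF kc_ai])
  moreover have "(\<lambda>s. kc s \<bullet> 1) = kph" by (simp add: kc_def fun_eq_iff inner_complex_def)
  ultimately show ?thesis by simp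
qed

lemma kph0: "0 \<le> kph s" by (simp add: kph_def)

lemmas H = cpos kph0 kph_ai yr_props(2) m1

lemma JJ_real: "t \<in> {-2..0} \<Longrightarrow> JJ m kc t = of_real (Jr m kph t)"
proof -
  assume t: "t \<in> {-2..0}"
  have "JJ m kc t = integral {-2..t} (\<lambda>s. of_real (exp (m * - s) * kph s))"
    unfolding JJ_def by (simp add: ee_def kc_def)
  also have "\<dots> = of_real (integral {-2..t} (\<lambda>s. exp (m * - s) * kph s))"
    by (rule int_of_real) (rule qr_int[OF H], use t in auto)
  finally show ?thesis using Jr_def[OF H] by simp
qed

lemma FF_real: "t \<in> {-2..0} \<Longrightarrow> FF m kc t = of_real (Fr m kph t)"
  unfolding FF_def Fr_def[OF H] using JJ_real[of t] JJ_real[of 0] by (simp add: ee_def)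

lemma Phi_FF_real: "Phi c (FF m kc) = of_real (Pr c m kph)"
proof -
  have "Phi c (FF m kc) = Phi c (\<lambda>t. of_real (Fr m kph t))" by (rule Phi_cong) (simp add: FF_real)
  also have "\<dots> = of_real (Pr c m kph)"
  proof -
    have i: "integral {a..b} (\<lambda>t. complex_of_real (Fr m kph t)) = of_real (integral {a..b} (Fr m kph))"
      if "{a..b} \<subseteq> {-2..0}" for a b
      by (rule int_of_real) (rule real_cont_int[OF H Fr_cont[OF H] that])
    show ?thesis unfolding Phi_def Pr_def[OF H] by (simp add: i)
  qed
  finally show ?thesis .
qed

lemma XX_real: "XX c m (fst h) kc = of_real (xr c m yrh kph)"
  unfolding XX_def xr_def[OF H] Phi_FF_real DD_real[OF cpos m1] yr_props(1) by simp

lemma sol_real: "t \<in> {-2..0} \<Longrightarrow> sol c m (fst h) kc t = of_real (exp (m * t) * xr c m yrh kph + Fr m kph t)"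
  unfolding sol_def XX_real by (simp add: FF_real ee_def)

lemma phi_real: "phiE c h = of_real (phr c yrh kph)"
proof -
  have "integral {-2..0} (snd h) = integral {-2..0} kc" by (rule AE_int_eq[OF kc_AE]) auto
  also have "\<dots> = of_real (integral {-2..0} kph)"
    unfolding kc_def by (rule int_of_real) (rule kp_int[OF H], auto)
  finally show ?thesis unfolding phiE_def phr_def[OF H] Gr_def[OF H] yr_props(1) by simp
qed

lemma res_eq: "eqE (resolvent c (of_real m) h) (XX c m (fst h) kc, sol c m (fst h) kc)"
proof -
  have D: "DD c m \<noteq> 0" by (rule DD_nz[OF cpos m1 m0])
  have hk: "eqE (fst h, kc) h" unfolding eqE_def using kc_AE by (auto elim: eventually_mono)
  have "\<exists>v w. A_graph c v w \<and> eqE (diffE (scaleE (of_real m) v) w) h"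
    using exist[OF kc_ai D, of "fst h"] hk by (intro exI[of _ "(XX c m (fst h) kc, sol c m (fst h) kc)"] exI[of _ "(Phi c (sol c m (fst h) kc), solg c m (fst h) kc)"]) auto
  then have "\<exists>w. A_graph c (resolvent c (of_real m) h) w \<and> eqE (diffE (scaleE (of_real m) (resolvent c (of_real m) h)) w) h"
    unfolding resolvent_def by (rule someI_ex)
  then obtain w where G: "A_graph c (resolvent c (of_real m) h) w"
    and E: "eqE (diffE (scaleE (of_real m) (resolvent c (of_real m) h)) w) h" by blast
  have "eqE (diffE (scaleE (of_real m) (resolvent c (of_real m) h)) w) (fst h, kc)"
    using eqE_trans[OF E eqE_sym[OF hk]] .
  then show ?thesis by (rule uniq[OF kc_ai D G])
qed

lemma res_props:
  "fst (resolvent c (of_real m) h) = of_real (xr c m yrh kph)"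
  "AE s in lborel. s \<in> {-2..0} \<longrightarrow> snd (resolvent c (of_real m) h) s = of_real (exp (m * s) * xr c m yrh kph + Fr m kph s)"
  using res_eq unfolding eqE_def by (auto simp: XX_real sol_real elim!: eventually_mono)

end

lemma posE_real:
  assumes "fst v = of_real a" "0 \<le> a"
    and "AE s in lborel. s \<in> {-2..0} \<longrightarrow> (\<exists>b. snd v s = of_real b \<and> 0 \<le> b)"
  shows "posE v"
  using assms unfolding posE_def by (auto elim!: eventually_mono)

theorem theorem6p11:
  fixes c :: real
  assumes "c > 0"
  shows "(\<exists>\<epsilon>>0. (\<forall>\<mu>\<in>{0<..<\<epsilon>}. in_resolvent_set c (of_real \<mu>)) \<and>
            (\<forall>\<mu>\<in>{0<..<\<epsilon>}. succeqE (resolvent c (of_real \<mu>)) (tensorE uE (phiE c))))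
       \<and> (\<exists>\<epsilon>>0. (\<forall>\<mu>\<in>{-\<epsilon><..<0}. in_resolvent_set c (of_real \<mu>)) \<and>
            (\<forall>\<mu>\<in>{-\<epsilon><..<0}. succeqE (\<lambda>h. scaleE (-1) (tensorE uE (phiE c) h))
                                       (resolvent c (of_real \<mu>))))"
proof (intro conjI)
  have cpos: "0 < c" using assms .
  show "\<exists>\<epsilon>>0. (\<forall>\<mu>\<in>{0<..<\<epsilon>}. in_resolvent_set c (of_real \<mu>)) \<and>
            (\<forall>\<mu>\<in>{0<..<\<epsilon>}. succeqE (resolvent c (of_real \<mu>)) (tensorE uE (phiE c)))"
  proof (intro exI[of _ "1/10"] conjI ballI)
    fix \<mu> :: real assume mu: "\<mu> \<in> {0<..<1/10}"
    have m1: "\<bar>\<mu>\<bar> < 1/10" and m0: "\<mu> \<noteq> 0" and mp: "0 < \<mu>" using mu by auto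
    show "in_resolvent_set c (of_real \<mu>)" by (rule in_res[OF DD_nz[OF cpos m1 m0]])
    define \<kappa> where "\<kappa> = 1 / (4 * (1 + 3*c) * \<mu>)"
    have kp: "0 < \<kappa>" unfolding \<kappa>_def using cpos mp by simp
    show "succeqE (resolvent c (of_real \<mu>)) (tensorE uE (phiE c))"
      unfolding succeqE_def
    proof (intro exI[of _ "\<kappa>/2"] conjI allI impI)
      show "0 < \<kappa>/2" using kp by simp
      fix h assume hh: "inE h \<and> posE h"
      then have hE: "inE h" and hP: "posE h" by auto
      note HH = cpos kph0[OF cpos m1 m0 hE hP] kph_ai[OF cpos m1 m0 hE hP] yr_props(2)[OF cpos m1 m0 hE hP] m1
      define X where "X = xr c \<mu> (yrh h) (kph h)"
      define P where "P = phr c (yrh h) (kph h)"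
      have PC: "\<kappa> * P \<le> X \<and> (\<forall>t\<in>{-2..0}. \<kappa> / 2 * P \<le> exp (\<mu> * t) * X + Fr \<mu> (kph h) t)"
        using pos_case[OF HH mp] unfolding X_def P_def \<kappa>_def .
      have P0: "0 \<le> P" unfolding P_def by (rule phr_nn[OF HH])
      have R1: "fst (resolvent c (of_real \<mu>) h) = of_real X"
        using res_props(1)[OF cpos m1 m0 hE hP] unfolding X_def .
      have R2: "AE s in lborel. s \<in> {-2..0} \<longrightarrow> snd (resolvent c (of_real \<mu>) h) s = of_real (exp (\<mu> * s) * X + Fr \<mu> (kph h) s)"
        using res_props(2)[OF cpos m1 m0 hE hP] unfolding X_def .
      have ph: "phiE c h = of_real P" unfolding P_def by (rule phi_real[OF cpos m1 m0 hE hP])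
      show "posE (diffE (resolvent c (of_real \<mu>) h) (scaleE (of_real (\<kappa>/2)) (tensorE uE (phiE c) h)))"
      proof (rule posE_real)
        show "fst (diffE (resolvent c (of_real \<mu>) h) (scaleE (of_real (\<kappa>/2)) (tensorE uE (phiE c) h))) = of_real (X - \<kappa>/2 * P)"
          by (simp add: diffE_def scaleE_def tensorE_def uE_def R1 ph)
        have "\<kappa>/2 * P \<le> \<kappa> * P" using kp P0 by (intro mult_right_mono) auto
        then show "0 \<le> X - \<kappa>/2 * P" using PC by linarith
        show "AE s in lborel. s \<in> {-2..0} \<longrightarrow> (\<exists>b. snd (diffE (resolvent c (of_real \<mu>) h) (scaleE (of_real (\<kappa>/2)) (tensorE uE (phiE c) h))) s = of_real b \<and> 0 \<le> b)"
          using R2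
        proof (rule eventually_mono, intro impI)
          fix s assume a: "s \<in> {-2..0} \<longrightarrow> snd (resolvent c (of_real \<mu>) h) s = of_real (exp (\<mu> * s) * X + Fr \<mu> (kph h) s)"
            and s: "s \<in> {-2..0}"
          show "\<exists>b. snd (diffE (resolvent c (of_real \<mu>) h) (scaleE (of_real (\<kappa>/2)) (tensorE uE (phiE c) h))) s = of_real b \<and> 0 \<le> b"
            using a s PC by (intro exI[of _ "exp (\<mu> * s) * X + Fr \<mu> (kph h) s - \<kappa>/2 * P"]) (auto simp: diffE_def scaleE_def tensorE_def uE_def ph)
        qed
      qed
    qed
  qed simp
next
  have cpos: "0 < c" using assms .
  define \<epsilon> where "\<epsilon> = min (1/10) (c / (10 * (1 + 5*c)))"
  have ep: "0 < \<epsilon>" unfolding \<epsilon>_def using cpos by simp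
  show "\<exists>\<epsilon>>0. (\<forall>\<mu>\<in>{-\<epsilon><..<0}. in_resolvent_set c (of_real \<mu>)) \<and>
            (\<forall>\<mu>\<in>{-\<epsilon><..<0}. succeqE (\<lambda>h. scaleE (-1) (tensorE uE (phiE c) h))
                                       (resolvent c (of_real \<mu>)))"
  proof (intro exI[of _ \<epsilon>] conjI ballI ep)
    fix \<mu> :: real assume mu: "\<mu> \<in> {-\<epsilon><..<0}"
    have m1: "\<bar>\<mu>\<bar> < 1/10" and m0: "\<mu> \<noteq> 0" and mn: "\<mu> < 0" and ms: "\<bar>\<mu>\<bar> < c / (10 * (1 + 5*c))"
      using mu unfolding \<epsilon>_def by auto
    show "in_resolvent_set c (of_real \<mu>)" by (rule in_res[OF DD_nz[OF cpos m1 m0]])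
    define c' where "c' = 4 * c / 5"
    have c'p: "0 < c'" unfolding c'_def using cpos by simp
    show "succeqE (\<lambda>h. scaleE (-1) (tensorE uE (phiE c) h)) (resolvent c (of_real \<mu>))"
      unfolding succeqE_def
    proof (intro exI[of _ c'] conjI allI impI c'p)
      fix h assume hh: "inE h \<and> posE h"
      then have hE: "inE h" and hP: "posE h" by auto
      note HH = cpos kph0[OF cpos m1 m0 hE hP] kph_ai[OF cpos m1 m0 hE hP] yr_props(2)[OF cpos m1 m0 hE hP] m1
      define X where "X = xr c \<mu> (yrh h) (kph h)"
      define P where "P = phr c (yrh h) (kph h)"
      have NC: "X \<le> -(5 / (4*c)) * P \<and> (\<forall>t\<in>{-2..0}. exp (\<mu> * t) * X + Fr \<mu> (kph h) t \<le> -(5 / (4*c)) * P)"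
        using neg_case[OF HH mn ms] unfolding X_def P_def .
      have R1: "fst (resolvent c (of_real \<mu>) h) = of_real X"
        using res_props(1)[OF cpos m1 m0 hE hP] unfolding X_def .
      have R2: "AE s in lborel. s \<in> {-2..0} \<longrightarrow> snd (resolvent c (of_real \<mu>) h) s = of_real (exp (\<mu> * s) * X + Fr \<mu> (kph h) s)"
        using res_props(2)[OF cpos m1 m0 hE hP] unfolding X_def .
      have ph: "phiE c h = of_real P" unfolding P_def by (rule phi_real[OF cpos m1 m0 hE hP])
      have key: "0 \<le> -P - c' * z" if "z \<le> -(5 / (4*c)) * P" for z
      proof -
        have "c' * z \<le> c' * (-(5 / (4*c)) * P)" using that c'p by (intro mult_left_mono) auto
        also have "c' * (-(5 / (4*c)) * P) = -P" unfolding c'_def using cpos by (simp add: field_simps)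
        finally show ?thesis by linarith
      qed
      show "posE (diffE (scaleE (-1) (tensorE uE (phiE c) h)) (scaleE (of_real c') (resolvent c (of_real \<mu>) h)))"
      proof (rule posE_real)
        show "fst (diffE (scaleE (-1) (tensorE uE (phiE c) h)) (scaleE (of_real c') (resolvent c (of_real \<mu>) h))) = of_real (-P - c' * X)"
          by (simp add: diffE_def scaleE_def tensorE_def uE_def R1 ph)
        show "0 \<le> -P - c' * X" using key NC by blast
        show "AE s in lborel. s \<in> {-2..0} \<longrightarrow> (\<exists>b. snd (diffE (scaleE (-1) (tensorE uE (phiE c) h)) (scaleE (of_real c') (resolvent c (of_real \<mu>) h))) s = of_real b \<and> 0 \<le> b)"
          using R2
        proof (rule eventually_mono, intro impI)
          fix s assume a: "s \<in> {-2..0} \<longrightarrow> snd (resolvent c (of_real \<mu>) h) s = of_real (exp (\<mu> * s) * X + Fr \<mu> (kph h) s)"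
            and s: "s \<in> {-2..0}"
          have "0 \<le> -P - c' * (exp (\<mu> * s) * X + Fr \<mu> (kph h) s)" using key NC s by blast
          then show "\<exists>b. snd (diffE (scaleE (-1) (tensorE uE (phiE c) h)) (scaleE (of_real c') (resolvent c (of_real \<mu>) h))) s = of_real b \<and> 0 \<le> b"
            using a s by (intro exI[of _ "-P - c' * (exp (\<mu> * s) * X + Fr \<mu> (kph h) s)"]) (auto simp: diffE_def scaleE_def tensorE_def uE_def ph)
        qed
      qed
    qed
  qed
qed


end
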